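(* For every integer $n>1$ and every $k\in\mathbb{Z}$, $$(\Lambda_{Ld}\ast\beta_k)(n)=Ld(n)\beta_k(n)-\beta_{k-1}(n).$$
   Context: $Ld(n)=\sum_{p^\alpha\parallel n}\frac{\alpha}{p}$ (sum over primes $p\mid n$, $\alpha$ the exact exponent of $p$ in $n$). $\Lambda_{Ld}(n)=\frac1p$ if $n=p^k$ for some prime $p$ and integer $k\geq1$, and $0$ otherwise. $\beta_k(n)=\sum_{p\mid n}p^k$ (sum over distinct primes dividing $n$). $\ast$ is Dirichlet convolution. *)

theory Defs
  imports "HOL-Number_Theory.Number_Theory"
begin

definition Ld :: "nat \<Rightarrow> real" where
  "Ld n = (\<Sum>p\<in>prime_factors n. real (multiplicity p n) / real p)"

definition Lambda_Ld :: "nat \<Rightarrow> real" where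
  "Lambda_Ld n = (if primepow n then 1 / real (aprimedivisor n) else 0)"

definition beta :: "int \<Rightarrow> nat \<Rightarrow> real" where
  "beta k n = (\<Sum>p\<in>prime_factors n. real p powi k)"

definition dirichlet_conv :: "(nat \<Rightarrow> real) \<Rightarrow> (nat \<Rightarrow> real) \<Rightarrow> nat \<Rightarrow> real" where
  "dirichlet_conv f g n = (\<Sum>d | d dvd n. f d * g (n div d))"

end

theory Submission
  imports Defs
begin

lemma pf_div:
  fixes n p j :: nat
  assumes p: "prime p" and n: "n > 0" and j: "1 \<le> j" "j \<le> multiplicity p n"
  shows "prime_factors (n div p ^ j) =
           (if j = multiplicity p n then prime_factors n - {p} else prime_factors n)"
proof -
  define m where "m = n div p ^ j"
  have d: "p ^ j dvd n" using j by (simp add: multiplicity_dvd')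
  have nm: "n = p ^ j * m" using d m_def by simp
  have m0: "m \<noteq> 0" using nm n by auto
  have p0: "p ^ j \<noteq> 0" using p by (simp add: prime_gt_0_nat)
  have U: "prime_factors n = {p} \<union> prime_factors m"
    using prime_factors_product[OF p0 m0] nm p j
    by (simp add: prime_factors_power prime_prime_factors)
  have "p \<in> prime_factors m \<longleftrightarrow> p dvd m" using p m0 by (auto simp: in_prime_factors_iff)
  also have "\<dots> \<longleftrightarrow> p ^ (j+1) dvd n"
    using nm p0 by (auto simp: mult_dvd_mono)
  also have "\<dots> \<longleftrightarrow> j + 1 \<le> multiplicity p n"
    using p n by (subst power_dvd_iff_le_multiplicity) auto
  finally have pm: "p \<in> prime_factors m \<longleftrightarrow> j \<noteq> multiplicity p n" using j by auto
  show ?thesis unfolding m_def[symmetric] using U pm by auto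
qed

lemma beta_div:
  fixes n p j :: nat
  assumes p: "prime p" and n: "n > 0" and j: "1 \<le> j" "j \<le> multiplicity p n"
  shows "beta k (n div p ^ j) =
           beta k n - (if j = multiplicity p n then real p powi k else 0)"
proof -
  have pn: "p \<in> prime_factors n"
    using j p n by (metis dvd_trans dvd_power in_prime_factors_iff le_trans
        multiplicity_dvd' not_gr0 not_one_le_zero)
  show ?thesis
    using pf_div[OF assms] pn
    by (auto simp: beta_def sum_diff1)
qed

theorem theorem3p3:
  fixes n :: nat and k :: int
  assumes "n > 1"
  shows "dirichlet_conv Lambda_Ld (beta k) n = Ld n * beta k n - beta (k - 1) n"
proof -
  have n0: "n > 0" using assms by simp
  let ?S = "Sigma (prime_factors n) (\<lambda>p. {1..multiplicity p n})"
  let ?D = "{d. d dvd n \<and> primepow d}"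
  have fin: "finite {d. d dvd n}" using n0 by simp
  have "dirichlet_conv Lambda_Ld (beta k) n = (\<Sum>d\<in>?D. Lambda_Ld d * beta k (n div d))"
    unfolding dirichlet_conv_def
    by (rule sum.mono_neutral_right[OF fin]) (auto simp: Lambda_Ld_def)
  also have "?D = (\<lambda>(p,j). p ^ j) ` ?S"
  proof (rule equalityI; rule subsetI)
    fix d assume "d \<in> ?D"
    then obtain p j where pj: "prime p" "j > 0" "d = p ^ j" and dn: "d dvd n"
      by (auto simp: primepow_def)
    have "p ^ j dvd n" using dn pj by simp
    then have "j \<le> multiplicity p n" using pj n0 by (subst (asm) power_dvd_iff_le_multiplicity) auto
    moreover have "p \<in> prime_factors n" using pj dn n0
      by (metis dvd_power dvd_trans in_prime_factors_iff not_gr0 less_not_refl)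
    ultimately show "d \<in> (\<lambda>(p,j). p ^ j) ` ?S" using pj by force
  next
    fix d assume "d \<in> (\<lambda>(p,j). p ^ j) ` ?S"
    then obtain p j where "p \<in> prime_factors n" "1 \<le> j" "j \<le> multiplicity p n" "d = p ^ j"
      by auto
    then show "d \<in> ?D"
    proof -
      assume a: "p \<in> prime_factors n" "1 \<le> j" "j \<le> multiplicity p n" "d = p ^ j"
      have "prime p" using a by auto
      then have "primepow d" unfolding primepow_def using a by (intro exI[of _ p] conjI exI[of _ j]) auto
      moreover have "d dvd n" using a by (simp add: multiplicity_dvd')
      ultimately show ?thesis by simp
    qed
  qed
  also have "(\<Sum>d\<in>(\<lambda>(p,j). p ^ j) ` ?S. Lambda_Ld d * beta k (n div d))
      = (\<Sum>(p,j)\<in>?S. Lambda_Ld (p ^ j) * beta k (n div p ^ j))"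
  proof (subst sum.reindex)
    show "inj_on (\<lambda>(p,j). p ^ j) ?S"
    proof (rule inj_onI)
      fix u v assume h0: "u \<in> ?S" "v \<in> ?S" "(\<lambda>(p,j). p ^ j) u = (\<lambda>(p::nat,j::nat). p ^ j) v"
      obtain x y xa ya where uv: "u = (x, y)" "v = (xa, ya)" by (cases u, cases v) auto
      have h: "(x, y) \<in> ?S" "(xa, ya) \<in> ?S" "x ^ y = xa ^ ya" using h0 uv by auto
      have "prime x" "prime xa" "y > 0" "ya > 0" using h(1,2) by auto
      then have "x = xa \<and> y = ya" using prime_power_inj'[OF _ _ h(3)] by blast
      then show "u = v" using uv by simp
    qed
  qed (simp add: case_prod_unfold)
  also have "\<dots> = (\<Sum>p\<in>prime_factors n. \<Sum>j\<in>{1..multiplicity p n}.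
                     Lambda_Ld (p ^ j) * beta k (n div p ^ j))"
    by (rule sum.Sigma[symmetric]) auto
  also have "\<dots> = (\<Sum>p\<in>prime_factors n. \<Sum>j\<in>{1..multiplicity p n}.
                     (1 / real p) * (beta k n - (if j = multiplicity p n then real p powi k else 0)))"
  proof (intro sum.cong refl)
    fix p j assume pp: "p \<in> prime_factors n" and jj: "j \<in> {1..multiplicity p n}"
    have pr: "prime p" using pp by auto
    have "primepow (p ^ j)" unfolding primepow_def using pr jj by (intro exI[of _ p] conjI exI[of _ j]) auto
    then have "Lambda_Ld (p ^ j) = 1 / real p"
      using pr jj by (simp add: Lambda_Ld_def aprimedivisor_prime_power)
    then show "Lambda_Ld (p ^ j) * beta k (n div p ^ j) =
       (1 / real p) * (beta k n - (if j = multiplicity p n then real p powi k else 0))"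
      using beta_div[OF pr n0, of j k] jj by simp
  qed
  also have "\<dots> = (\<Sum>p\<in>prime_factors n. real (multiplicity p n) / real p * beta k n
                     - real p powi (k - 1))"
  proof (intro sum.cong refl)
    fix p assume pp: "p \<in> prime_factors n"
    have pr: "prime p" and m1: "multiplicity p n \<ge> 1" using pp n0
      by (auto simp: prime_factors_multiplicity)
    have p0: "real p \<noteq> 0" using pr by (simp add: prime_gt_0_nat)
    have "(\<Sum>j\<in>{1..multiplicity p n}.
                     (1 / real p) * (beta k n - (if j = multiplicity p n then real p powi k else 0)))
        = (\<Sum>j\<in>{1..multiplicity p n}. (1 / real p) * beta k n)
          - (\<Sum>j\<in>{1..multiplicity p n}. (if j = multiplicity p n then real p powi k / real p else 0))"
      by (subst sum_subtractf[symmetric]) (intro sum.cong refl, auto simp: diff_divide_distrib)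
    also have "\<dots> = real (multiplicity p n) / real p * beta k n - real p powi k / real p"
    proof -
      have A: "(\<Sum>j\<in>{1..multiplicity p n}. (1 / real p) * beta k n) = real (multiplicity p n) / real p * beta k n"
        by simp
      have B: "(\<Sum>j\<in>{1..multiplicity p n}. (if j = multiplicity p n then real p powi k / real p else 0))
           = real p powi k / real p"
        using m1 by (subst sum.delta) auto
      show ?thesis by (simp only: A B)
    qed
    also have "real p powi k / real p = real p powi (k - 1)"
      using p0 power_int_minus_mult[of "real p" k] by (simp add: field_simps)
    finally show "(\<Sum>j\<in>{1..multiplicity p n}.
                     (1 / real p) * (beta k n - (if j = multiplicity p n then real p powi k else 0)))
        = real (multiplicity p n) / real p * beta k n - real p powi (k - 1)" .
  qed
  also have "\<dots> = Ld n * beta k n - beta (k - 1) n"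
    by (simp add: Ld_def beta_def sum_subtractf sum_distrib_right)
  finally show ?thesis .
qed

end
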